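(* Let $\psi\in\mathcal A$. Then $S_\psi\in\mathcal C(\rho)$.
   Context: Let $G$ be a locally compact abelian group (written additively) with Haar measure $\nu$, and $(Y,\lambda)$ a measure space. Let $H$ be a reproducing kernel Hilbert space of complex functions on $G\times Y$ whose inner product is that of $L^2(G\times Y,\nu\otimes\lambda)$, with reproducing kernel $(K_{x,y})_{(x,y)\in G\times Y}$. Assume $K_{x,y}(u,v)=K_{0,y}(u-x,v)$ for all $u,x\in G$, $v,y\in Y$. For $a\in G$ let $(\rho(a)f)(x,y)=f(x-a,y)$ and $\mathcal C(\rho)=\{S\in\mathcal B(H): S\rho(a)=\rho(a)S\ \forall a\in G\}$. Let $\mathcal A_0$ be the set of functions $\psi\colon G\times Y\times Y\to\mathbb C$ such that $\psi(\cdot,\cdot,v)\in H$ for every $v\in Y$ and $(u,v)\mapsto\overline{\psi(-u,y,v)}$ belongs to $H$ for every $y\in Y$. For $\psi\in\mathcal A_0$, $f\in H$, define $(S_\psi f)(x,y)=\int_{G\times Y}f(u,v)\psi(x-u,y,v)\,d\nu(u)\,d\lambda(v)$. Let $\mathcal A$ be the set of $\psi\in\mathcal A_0$ such that $S_\psi f\in H$ for all $f\in H$ and $S_\psi$ is bounded on $H$. *)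

theory Defs
  imports "HOL-Analysis.Analysis"
begin

definition haar_measure :: "'g::{topological_ab_group_add, t2_space} measure \<Rightarrow> bool" where
  "haar_measure \<nu> \<longleftrightarrow>
     sets \<nu> = sets borel \<and>
     (\<forall>K. compact K \<longrightarrow> emeasure \<nu> K < \<infinity>) \<and>
     (\<forall>A\<in>sets borel. emeasure \<nu> A = (INF U\<in>{U. open U \<and> A \<subseteq> U}. emeasure \<nu> U)) \<and>
     (\<forall>U. open U \<longrightarrow> emeasure \<nu> U = (SUP K\<in>{K. compact K \<and> K \<subseteq> U}. emeasure \<nu> K)) \<and>
     (\<forall>a. \<forall>A\<in>sets borel. emeasure \<nu> ((\<lambda>x. a + x) ` A) = emeasure \<nu> A) \<and>
     emeasure \<nu> UNIV > 0"

definition l2_inner :: "'a measure \<Rightarrow> ('a \<Rightarrow> complex) \<Rightarrow> ('a \<Rightarrow> complex) \<Rightarrow> complex" where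
  "l2_inner M f g = (LINT p|M. f p * cnj (g p))"

definition l2_norm :: "'a measure \<Rightarrow> ('a \<Rightarrow> complex) \<Rightarrow> real" where
  "l2_norm M f = sqrt (LINT p|M. (cmod (f p))\<^sup>2)"

definition square_integrable :: "'a measure \<Rightarrow> ('a \<Rightarrow> complex) \<Rightarrow> bool" where
  "square_integrable M f \<longleftrightarrow> f \<in> borel_measurable M \<and> integrable M (\<lambda>p. (cmod (f p))\<^sup>2)"

definition rkhs_L2 :: "('a \<times> 'b) measure \<Rightarrow> (('a \<times> 'b) \<Rightarrow> complex) set
      \<Rightarrow> ('a \<Rightarrow> 'b \<Rightarrow> ('a \<times> 'b \<Rightarrow> complex)) \<Rightarrow> bool" where
  "rkhs_L2 M H K \<longleftrightarrow>
     (\<forall>f\<in>H. square_integrable M f) \<and>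
     (\<lambda>_. 0) \<in> H \<and>
     (\<forall>f\<in>H. \<forall>g\<in>H. (\<lambda>p. f p + g p) \<in> H) \<and>
     (\<forall>c. \<forall>f\<in>H. (\<lambda>p. c * f p) \<in> H) \<and>
     (\<forall>s. (\<forall>n. s n \<in> H) \<longrightarrow>
          (\<forall>e>0. \<exists>N. \<forall>m\<ge>N. \<forall>n\<ge>N. l2_norm M (\<lambda>p. s m p - s n p) < e) \<longrightarrow>
          (\<exists>f\<in>H. (\<lambda>n. l2_norm M (\<lambda>p. s n p - f p)) \<longlonglongrightarrow> 0)) \<and>
     (\<forall>x y. K x y \<in> H) \<and>
     (\<forall>f\<in>H. \<forall>x y. f (x, y) = l2_inner M f (K x y))"

definition rho :: "'g::ab_group_add \<Rightarrow> ('g \<times> 'y \<Rightarrow> complex) \<Rightarrow> ('g \<times> 'y \<Rightarrow> complex)" where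
  "rho a f = (\<lambda>(x, y). f (x - a, y))"

definition bounded_ops :: "('a \<Rightarrow> complex) set \<Rightarrow> 'a measure
      \<Rightarrow> (('a \<Rightarrow> complex) \<Rightarrow> ('a \<Rightarrow> complex)) set" where
  "bounded_ops H M = {S. (\<forall>f\<in>H. S f \<in> H) \<and>
       (\<forall>f\<in>H. \<forall>g\<in>H. S (\<lambda>p. f p + g p) = (\<lambda>p. S f p + S g p)) \<and>
       (\<forall>c. \<forall>f\<in>H. S (\<lambda>p. c * f p) = (\<lambda>p. c * S f p)) \<and>
       (\<exists>C. \<forall>f\<in>H. l2_norm M (S f) \<le> C * l2_norm M f)}"

definition commutant_rho :: "('g::ab_group_add \<times> 'y \<Rightarrow> complex) set \<Rightarrow> ('g \<times> 'y) measure
      \<Rightarrow> (('g \<times> 'y \<Rightarrow> complex) \<Rightarrow> ('g \<times> 'y \<Rightarrow> complex)) set" where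
  "commutant_rho H M = {S \<in> bounded_ops H M. \<forall>a. \<forall>f\<in>H. S (rho a f) = rho a (S f)}"

definition A0 :: "('g::ab_group_add \<times> 'y \<Rightarrow> complex) set \<Rightarrow> ('g \<Rightarrow> 'y \<Rightarrow> 'y \<Rightarrow> complex) set" where
  "A0 H = {\<psi>. (\<forall>v. (\<lambda>(u, y). \<psi> u y v) \<in> H) \<and> (\<forall>y. (\<lambda>(u, v). cnj (\<psi> (- u) y v)) \<in> H)}"

definition S_op :: "('g::ab_group_add \<times> 'y) measure \<Rightarrow> ('g \<Rightarrow> 'y \<Rightarrow> 'y \<Rightarrow> complex)
      \<Rightarrow> ('g \<times> 'y \<Rightarrow> complex) \<Rightarrow> ('g \<times> 'y \<Rightarrow> complex)" where
  "S_op M \<psi> f = (\<lambda>(x, y). LINT p|M. f p * \<psi> (x - fst p) y (snd p))"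

definition A_set :: "('g::ab_group_add \<times> 'y \<Rightarrow> complex) set \<Rightarrow> ('g \<times> 'y) measure
      \<Rightarrow> ('g \<Rightarrow> 'y \<Rightarrow> 'y \<Rightarrow> complex) set" where
  "A_set H M = {\<psi> \<in> A0 H. (\<forall>f\<in>H. S_op M \<psi> f \<in> H) \<and>
       (\<exists>C. \<forall>f\<in>H. l2_norm M (S_op M \<psi> f) \<le> C * l2_norm M f)}"

end

theory Submission
  imports Defs
begin

lemma nn_integral_comp_le:
  assumes sig: "\<sigma> \<in> measurable M M" and d: "distr M M \<sigma> = M"
    and inv: "\<And>x. \<tau> (\<sigma> x) = x"
  shows "(\<integral>\<^sup>+x. F (\<tau> x) \<partial>M) \<le> (\<integral>\<^sup>+x. F x \<partial>M)"
  unfolding nn_integral_def[of M "\<lambda>x. F (\<tau> x)"]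
proof (rule SUP_least, clarify)
  fix g assume g: "simple_function M g" "g \<le> (\<lambda>x. F (\<tau> x))"
  have gm: "g \<in> borel_measurable M" using g(1) by (rule borel_measurable_simple_function)
  have "integral\<^sup>S M g = integral\<^sup>N M g" using g(1) by (simp add: nn_integral_eq_simple_integral)
  also have "\<dots> = integral\<^sup>N (distr M M \<sigma>) g" using d by simp
  also have "\<dots> = (\<integral>\<^sup>+x. g (\<sigma> x) \<partial>M)"
    by (rule nn_integral_distr[OF sig]) (simp add: d gm)
  also have "\<dots> \<le> (\<integral>\<^sup>+x. F x \<partial>M)"
  proof (rule nn_integral_mono)
    fix x show "g (\<sigma> x) \<le> F x" using g(2) inv[of x] by (metis le_funD)
  qed
  finally show "integral\<^sup>S M g \<le> (\<integral>\<^sup>+x. F x \<partial>M)" .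
qed

lemma nn_integral_comp_eq:
  assumes "\<sigma> \<in> measurable M M" "distr M M \<sigma> = M"
    and "\<tau> \<in> measurable M M" "distr M M \<tau> = M"
    and "\<And>x. \<tau> (\<sigma> x) = x" "\<And>x. \<sigma> (\<tau> x) = x"
  shows "(\<integral>\<^sup>+x. F (\<tau> x) \<partial>M) = (\<integral>\<^sup>+x. F x \<partial>M)"
proof (rule antisym)
  show "(\<integral>\<^sup>+x. F (\<tau> x) \<partial>M) \<le> (\<integral>\<^sup>+x. F x \<partial>M)" by (rule nn_integral_comp_le[OF assms(1,2,5)])
  have "(\<integral>\<^sup>+x. F x \<partial>M) = (\<integral>\<^sup>+x. (\<lambda>y. F (\<tau> y)) (\<sigma> x) \<partial>M)" using assms(5) by simp
  also have "\<dots> \<le> (\<integral>\<^sup>+x. F (\<tau> x) \<partial>M)"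
    by (rule nn_integral_comp_le[OF assms(3,4)]) (rule assms(6))
  finally show "(\<integral>\<^sup>+x. F x \<partial>M) \<le> (\<integral>\<^sup>+x. F (\<tau> x) \<partial>M)" .
qed

lemma haar_sets: "haar_measure \<nu> \<Longrightarrow> sets \<nu> = sets borel"
  unfolding haar_measure_def by (rule conjunct1)

lemma haar_inv: "haar_measure \<nu> \<Longrightarrow> \<forall>a. \<forall>A\<in>sets borel. emeasure \<nu> ((\<lambda>x. a + x) ` A) = emeasure \<nu> A"
  unfolding haar_measure_def by (drule conjunct2, drule conjunct2, drule conjunct2, drule conjunct2, drule conjunct1)

lemma haar_space: "haar_measure \<nu> \<Longrightarrow> space \<nu> = UNIV"
  unfolding haar_measure_def by (metis sets_eq_imp_space_eq space_borel)

lemma haar_trans_meas: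
  fixes \<nu> :: "'g::{topological_ab_group_add, t2_space} measure"
  assumes "haar_measure \<nu>"
  shows "(\<lambda>u. a + u) \<in> measurable \<nu> \<nu>"
proof -
  have s: "sets \<nu> = sets borel" using assms by (rule haar_sets)
  have "(\<lambda>u::'g. a + u) \<in> measurable borel borel"
    by (rule borel_measurable_continuous_onI) (intro continuous_intros)
  then show ?thesis using measurable_cong_sets[OF s s] by blast
qed

lemma haar_trans_distr:
  fixes \<nu> :: "'g::{topological_ab_group_add, t2_space} measure"
  assumes h: "haar_measure \<nu>"
  shows "distr \<nu> \<nu> (\<lambda>u. a + u) = \<nu>"
proof (rule measure_eqI)
  show "sets (distr \<nu> \<nu> (\<lambda>u. a + u)) = sets \<nu>" by simp
  fix A assume "A \<in> sets (distr \<nu> \<nu> (\<lambda>u. a + u))"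
  then have A: "A \<in> sets \<nu>" by simp
  have s: "sets \<nu> = sets borel" using h by (rule haar_sets)
  have inv: "\<forall>a. \<forall>A\<in>sets borel. emeasure \<nu> ((\<lambda>x. a + x) ` A) = emeasure \<nu> A"
    using h by (rule haar_inv)
  have eq: "(\<lambda>u. a + u) -` A \<inter> space \<nu> = (\<lambda>x. - a + x) ` A"
  proof (rule set_eqI)
    fix x
    show "x \<in> (\<lambda>u. a + u) -` A \<inter> space \<nu> \<longleftrightarrow> x \<in> (\<lambda>x. - a + x) ` A"
    proof
      assume "x \<in> (\<lambda>u. a + u) -` A \<inter> space \<nu>"
      then have "a + x \<in> A" by simp
      moreover have "x = - a + (a + x)" by (simp add: add.assoc[symmetric])
      ultimately show "x \<in> (\<lambda>x. - a + x) ` A" by (rule rev_image_eqI)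
    next
      assume "x \<in> (\<lambda>x. - a + x) ` A"
      then obtain y where "y \<in> A" "x = - a + y" by blast
      then show "x \<in> (\<lambda>u. a + u) -` A \<inter> space \<nu>" using haar_space[OF h] by (simp add: add.assoc[symmetric])
    qed
  qed
  show "emeasure (distr \<nu> \<nu> (\<lambda>u. a + u)) A = emeasure \<nu> A"
  proof -
    have "emeasure (distr \<nu> \<nu> (\<lambda>u. a + u)) A = emeasure \<nu> ((\<lambda>u. a + u) -` A \<inter> space \<nu>)"
      by (rule emeasure_distr[OF haar_trans_meas[OF h] A])
    also have "\<dots> = emeasure \<nu> ((\<lambda>x. - a + x) ` A)" by (simp only: eq)
    also have "\<dots> = emeasure \<nu> A" using inv A s by (metis (no_types))
    finally show ?thesis .
  qed
qed

lemma pair_trans: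
  fixes \<nu> :: "'g::{topological_ab_group_add, t2_space} measure" and lam :: "'y measure" and a :: 'g
  assumes h: "haar_measure \<nu>" and sl: "space lam = UNIV"
  shows "(\<lambda>p. (a + fst p, snd p)) \<in> measurable (\<nu> \<Otimes>\<^sub>M lam) (\<nu> \<Otimes>\<^sub>M lam)"
    and "distr (\<nu> \<Otimes>\<^sub>M lam) (\<nu> \<Otimes>\<^sub>M lam) (\<lambda>p. (a + fst p, snd p)) = \<nu> \<Otimes>\<^sub>M lam"
proof -
  let ?M = "\<nu> \<Otimes>\<^sub>M lam"
  let ?T = "\<lambda>p. (a + fst p, snd p)"
  have Tm: "?T \<in> measurable ?M ?M"
  proof (rule measurable_Pair)
    show "(\<lambda>p. a + fst p) \<in> measurable ?M \<nu>"
      using measurable_compose[OF measurable_fst haar_trans_meas[OF h, of a], of lam] by simp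
    show "snd \<in> measurable ?M lam" by (rule measurable_snd)
  qed
  then show "?T \<in> measurable ?M ?M" .
  have spM: "space ?M = UNIV" using haar_space[OF h] sl by (simp add: space_pair_measure)
  define \<Omega> where "\<Omega> = space \<nu> \<times> space lam"
  define G where "G = {A \<times> B | A B. A \<in> sets \<nu> \<and> B \<in> sets lam}"
  define \<mu> where "\<mu> = (\<lambda>X. \<integral>\<^sup>+x. (\<integral>\<^sup>+y. indicator X (x,y) \<partial>lam) \<partial>\<nu>)"
  have emM: "emeasure ?M = emeasure (measure_of \<Omega> G \<mu>)"
    unfolding \<Omega>_def G_def \<mu>_def by (simp only: pair_measure_def)
  have setsM: "sets ?M = sigma_sets \<Omega> G"
    unfolding \<Omega>_def G_def by (rule sets_pair_measure)
  have em: "Y \<in> sets ?M \<Longrightarrow> emeasure ?M Y = (if measure_space \<Omega> (sigma_sets \<Omega> G) \<mu> then \<mu> Y else 0)" for Y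
    unfolding emM emeasure_measure_of_conv using setsM by simp
  have mu: "\<mu> (?T -` X \<inter> space ?M) = \<mu> X" for X
  proof -
    define F where "F = (\<lambda>x. \<integral>\<^sup>+y. indicator X (x,y) \<partial>lam)"
    have "\<mu> (?T -` X \<inter> space ?M) = (\<integral>\<^sup>+x. F (a + x) \<partial>\<nu>)"
      unfolding \<mu>_def F_def spM by (simp add: indicator_def)
    also have "\<dots> = (\<integral>\<^sup>+x. F x \<partial>\<nu>)"
      by (rule nn_integral_comp_eq[where \<sigma>="\<lambda>x. -a + x" and \<tau>="\<lambda>x. a + x"])
         (simp_all only: haar_trans_meas[OF h] haar_trans_distr[OF h] add.assoc[symmetric] add.left_inverse add.right_inverse add_0)
    finally show ?thesis unfolding \<mu>_def F_def by simp
  qed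
  show "distr ?M ?M ?T = ?M"
  proof (rule measure_eqI)
    show "sets (distr ?M ?M ?T) = sets ?M" by simp
    fix X assume "X \<in> sets (distr ?M ?M ?T)"
    then have X: "X \<in> sets ?M" by simp
    have X': "?T -` X \<inter> space ?M \<in> sets ?M" using Tm X by (rule measurable_sets)
    have "emeasure (distr ?M ?M ?T) X = emeasure ?M (?T -` X \<inter> space ?M)"
      by (rule emeasure_distr[OF Tm X])
    also have "\<dots> = emeasure ?M X" using em[OF X] em[OF X'] mu[of X] by simp
    finally show "emeasure (distr ?M ?M ?T) X = emeasure ?M X" .
  qed
qed

lemma meas_cnj: "g \<in> borel_measurable M \<Longrightarrow> (\<lambda>p. cnj (g p :: complex)) \<in> borel_measurable M"
proof -
  assume g: "g \<in> borel_measurable M"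
  have "cnj \<in> borel_measurable borel"
    by (rule borel_measurable_continuous_onI) (intro continuous_intros)
  from measurable_compose[OF g this] show ?thesis .
qed

lemma sq_int_prod:
  assumes f: "square_integrable M f" and g: "square_integrable M g"
  shows "integrable M (\<lambda>p. f p * g p)"
proof (rule Bochner_Integration.integrable_bound)
  show "integrable M (\<lambda>p. (cmod (f p))\<^sup>2 + (cmod (g p))\<^sup>2)"
    using f g unfolding square_integrable_def by auto
  show "(\<lambda>p. f p * g p) \<in> borel_measurable M"
    using f g unfolding square_integrable_def by auto
  show "AE x in M. norm (f x * g x) \<le> norm ((cmod (f x))\<^sup>2 + (cmod (g x))\<^sup>2)"
  proof (rule AE_I2)
    fix x
    have "0 \<le> (cmod (f x) - cmod (g x))\<^sup>2" by simp
    then have "cmod (f x) * cmod (g x) \<le> (cmod (f x))\<^sup>2 + (cmod (g x))\<^sup>2"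
      by (simp add: power2_eq_square algebra_simps) (smt (verit) norm_ge_zero mult_nonneg_nonneg)
    then show "norm (f x * g x) \<le> norm ((cmod (f x))\<^sup>2 + (cmod (g x))\<^sup>2)"
      by (simp add: norm_mult)
  qed
qed

lemma trans_facts:
  fixes \<nu> :: "'g::{topological_ab_group_add, t2_space} measure" and lam :: "'y measure" and a :: 'g
    and g :: "'g \<times> 'y \<Rightarrow> 'b::{banach, second_countable_topology}"
  assumes h: "haar_measure \<nu>" and sl: "space lam = UNIV"
    and g: "g \<in> borel_measurable (\<nu> \<Otimes>\<^sub>M lam)"
  shows "(\<lambda>p. g (a + fst p, snd p)) \<in> borel_measurable (\<nu> \<Otimes>\<^sub>M lam)"
    and "integral\<^sup>L (\<nu> \<Otimes>\<^sub>M lam) g = (LINT p|(\<nu> \<Otimes>\<^sub>M lam). g (a + fst p, snd p))"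
    and "integrable (\<nu> \<Otimes>\<^sub>M lam) g \<Longrightarrow> integrable (\<nu> \<Otimes>\<^sub>M lam) (\<lambda>p. g (a + fst p, snd p))"
proof -
  note T = pair_trans[OF h sl, of a]
  show "(\<lambda>p. g (a + fst p, snd p)) \<in> borel_measurable (\<nu> \<Otimes>\<^sub>M lam)"
    using measurable_compose[OF T(1) g] by simp
  have "integral\<^sup>L (\<nu> \<Otimes>\<^sub>M lam) g = integral\<^sup>L (distr (\<nu> \<Otimes>\<^sub>M lam) (\<nu> \<Otimes>\<^sub>M lam) (\<lambda>p. (a + fst p, snd p))) g"
    using T(2) by simp
  also have "\<dots> = (LINT p|(\<nu> \<Otimes>\<^sub>M lam). g (a + fst p, snd p))"
    by (rule integral_distr[OF T(1) g])
  finally show "integral\<^sup>L (\<nu> \<Otimes>\<^sub>M lam) g = (LINT p|(\<nu> \<Otimes>\<^sub>M lam). g (a + fst p, snd p))" .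
  assume i: "integrable (\<nu> \<Otimes>\<^sub>M lam) g"
  then have "integrable (distr (\<nu> \<Otimes>\<^sub>M lam) (\<nu> \<Otimes>\<^sub>M lam) (\<lambda>p. (a + fst p, snd p))) g"
    using T(2) by simp
  then show "integrable (\<nu> \<Otimes>\<^sub>M lam) (\<lambda>p. g (a + fst p, snd p))"
    using integrable_distr_eq[OF T(1) g] by simp
qed

lemma kernel_sq:
  fixes \<nu> :: "'g::{topological_ab_group_add, t2_space} measure" and lam :: "'y measure"
  assumes h: "haar_measure \<nu>" and sl: "space lam = UNIV"
    and rk: "rkhs_L2 (\<nu> \<Otimes>\<^sub>M lam) H K" and psi: "\<psi> \<in> A0 H"
  shows "square_integrable (\<nu> \<Otimes>\<^sub>M lam) (\<lambda>p. \<psi> (x - fst p) y (snd p))"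
proof -
  define h0 where "h0 = (\<lambda>(u, v). cnj (\<psi> (- u) y v))"
  have "h0 \<in> H" using psi unfolding A0_def h0_def by blast
  then have sq: "square_integrable (\<nu> \<Otimes>\<^sub>M lam) h0" using rk unfolding rkhs_L2_def by blast
  then have m: "h0 \<in> borel_measurable (\<nu> \<Otimes>\<^sub>M lam)"
    and i: "integrable (\<nu> \<Otimes>\<^sub>M lam) (\<lambda>p. (cmod (h0 p))\<^sup>2)"
    unfolding square_integrable_def by auto
  have eq: "(\<lambda>p. \<psi> (x - fst p) y (snd p)) = (\<lambda>p. cnj (h0 (- x + fst p, snd p)))"
    unfolding h0_def by (simp add: split_beta)
  have m2: "(\<lambda>p. (cmod (h0 p))\<^sup>2) \<in> borel_measurable (\<nu> \<Otimes>\<^sub>M lam)" using m by measurable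
  show ?thesis unfolding square_integrable_def eq
  proof
    show "(\<lambda>p. cnj (h0 (- x + fst p, snd p))) \<in> borel_measurable (\<nu> \<Otimes>\<^sub>M lam)"
      by (rule meas_cnj, rule trans_facts(1)[OF h sl m])
    have "integrable (\<nu> \<Otimes>\<^sub>M lam) (\<lambda>p. (cmod (h0 (- x + fst p, snd p)))\<^sup>2)"
      using trans_facts(3)[OF h sl m2 i, of "-x"] by simp
    then show "integrable (\<nu> \<Otimes>\<^sub>M lam) (\<lambda>p. (cmod (cnj (h0 (- x + fst p, snd p))))\<^sup>2)" by simp
  qed
qed

theorem lemma5p10:
  fixes \<nu> :: "'g::{topological_ab_group_add, t2_space} measure"
    and lam :: "'y measure"
    and H :: "('g \<times> 'y \<Rightarrow> complex) set"
    and K :: "'g \<Rightarrow> 'y \<Rightarrow> ('g \<times> 'y \<Rightarrow> complex)"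
    and \<psi> :: "'g \<Rightarrow> 'y \<Rightarrow> 'y \<Rightarrow> complex"
  assumes "locally_compact_space (euclidean :: 'g topology)"
    and "haar_measure \<nu>"
    and "space lam = UNIV"
    and "rkhs_L2 (\<nu> \<Otimes>\<^sub>M lam) H K"
    and "\<And>x y u v. K x y (u, v) = K 0 y (u - x, v)"
    and "\<psi> \<in> A_set H (\<nu> \<Otimes>\<^sub>M lam)"
  shows "S_op (\<nu> \<Otimes>\<^sub>M lam) \<psi> \<in> commutant_rho H (\<nu> \<Otimes>\<^sub>M lam)"
proof -
  let ?M = "\<nu> \<Otimes>\<^sub>M lam"
  let ?S = "S_op ?M \<psi>"
  note h = assms(2) and sl = assms(3) and rk = assms(4)
  have psiA0: "\<psi> \<in> A0 H" and Sin: "\<forall>f\<in>H. ?S f \<in> H"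
    and bnd: "\<exists>C. \<forall>f\<in>H. l2_norm ?M (?S f) \<le> C * l2_norm ?M f"
    using assms(6) unfolding A_set_def by blast+
  have sqH: "\<And>f. f \<in> H \<Longrightarrow> square_integrable ?M f" using rk unfolding rkhs_L2_def by blast
  have kern: "\<And>x y. square_integrable ?M (\<lambda>p. \<psi> (x - fst p) y (snd p))"
    by (rule kernel_sq[OF h sl rk psiA0])
  have intg: "\<And>f x y. f \<in> H \<Longrightarrow> integrable ?M (\<lambda>p. f p * \<psi> (x - fst p) y (snd p))"
    by (rule sq_int_prod[OF sqH kern])
  have kmeas: "\<And>x y. (\<lambda>p. \<psi> (x - fst p) y (snd p)) \<in> borel_measurable ?M"
    using kern unfolding square_integrable_def by blast
  have add: "?S (\<lambda>p. f p + g p) = (\<lambda>p. ?S f p + ?S g p)" if "f \<in> H" "g \<in> H" for f g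
  proof
    fix p :: "'g \<times> 'y"
    obtain x y where p: "p = (x, y)" by (cases p)
    show "?S (\<lambda>p. f p + g p) p = ?S f p + ?S g p"
      unfolding p S_op_def using Bochner_Integration.integral_add[OF intg[OF that(1)] intg[OF that(2)], of x y]
      by (simp add: distrib_right)
  qed
  have smul: "?S (\<lambda>p. c * f p) = (\<lambda>p. c * ?S f p)" for c f
  proof
    fix p :: "'g \<times> 'y"
    obtain x y where p: "p = (x, y)" by (cases p)
    show "?S (\<lambda>p. c * f p) p = c * ?S f p"
      unfolding p S_op_def by (simp add: mult.assoc)
  qed
  have comm: "?S (rho a f) = rho a (?S f)" if "f \<in> H" for a f
  proof
    fix p :: "'g \<times> 'y"
    obtain x y where p: "p = (x, y)" by (cases p)
    have fm: "f \<in> borel_measurable ?M" using sqH[OF that] unfolding square_integrable_def by blast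
    define G where "G = (\<lambda>q. f (- a + fst q, snd q) * \<psi> (x - fst q) y (snd q))"
    have Gm: "G \<in> borel_measurable ?M"
      unfolding G_def using trans_facts(1)[OF h sl fm, of "-a"] kmeas[of x y] by measurable
    have "?S (rho a f) p = integral\<^sup>L ?M G"
      unfolding p S_op_def rho_def G_def by (simp add: split_beta)
    also have "\<dots> = (LINT q|?M. G (a + fst q, snd q))" by (rule trans_facts(2)[OF h sl Gm])
    also have "\<dots> = (LINT q|?M. f q * \<psi> (x - a - fst q) y (snd q))"
      unfolding G_def by (rule Bochner_Integration.integral_cong) (simp_all add: algebra_simps)
    also have "\<dots> = rho a (?S f) p"
      unfolding p S_op_def rho_def by simp
    finally show "?S (rho a f) p = rho a (?S f) p" .
  qed
  show ?thesis
    unfolding commutant_rho_def bounded_ops_def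
    using Sin bnd add smul comm by blast
qed

end
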